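(* For $t>0$ let $f_t(z)=\big(\frac{z}{z+1}\big)^2\exp(-t/z)$, $z\in\mathbb{C}_+$. There is a constant $C$ such that $f_t\in\mathcal{B}$ and $\|f_t\|_{\mathcal{B}}\le C(1+\log(1+t))$ for all $t>0$.
   Context: $\mathbb{C}_+=\{\Re z>0\}$. $\mathcal{B}$ is the space of holomorphic $f$ on $\mathbb{C}_+$ with $\int_0^\infty\sup_{y}|f'(x+iy)|dx<\infty$, normed by $\|f\|_{\mathcal{B}}=\sup_{\mathbb{C}_+}|f|+\int_0^\infty\sup_{y\in\mathbb{R}}|f'(x+iy)|\,dx$. *)

theory Defs
  imports "HOL-Analysis.Analysis"
begin

definition rhp :: "complex set" where
  "rhp = {z. Re z > 0}"

definition B_deriv_part :: "(complex \<Rightarrow> complex) \<Rightarrow> ennreal" where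
  "B_deriv_part f =
     (\<integral>\<^sup>+ x. (SUP y::real. ennreal (norm (deriv f (Complex x y)))) \<partial>(restrict_space lborel {0<..}))"

definition B_sup_part :: "(complex \<Rightarrow> complex) \<Rightarrow> ennreal" where
  "B_sup_part f = (SUP z\<in>rhp. ennreal (norm (f z)))"

definition B_norm :: "(complex \<Rightarrow> complex) \<Rightarrow> ennreal" where
  "B_norm f = B_sup_part f + B_deriv_part f"

definition in_B :: "(complex \<Rightarrow> complex) \<Rightarrow> bool" where
  "in_B f \<longleftrightarrow> f holomorphic_on rhp \<and> B_norm f < \<infinity>"

definition f_t :: "real \<Rightarrow> complex \<Rightarrow> complex" where
  "f_t t z = (z / (z + 1))^2 * exp (- complex_of_real t / z)"

end

theory Submission
  imports Defs
begin

lemma ft_eq: "f_t t = (\<lambda>z. (z / (z + 1))^2 * exp (- complex_of_real t / z))"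
  by (rule ext) (simp add: f_t_def)

lemma ft_has_deriv:
  assumes "Re z > 0"
  shows "(f_t t has_field_derivative exp(- of_real t / z) * (2*z/(z+1)^3 + of_real t/(z+1)^2)) (at z)"
proof -
  have z0: "z \<noteq> 0" using assms by auto
  have z1: "z + 1 \<noteq> 0" using assms by (metis add_pos_pos less_irrefl plus_complex.sel(1) zero_complex.sel(1) zero_less_one one_complex.sel(1))
  have e: "((\<lambda>x. exp (- (complex_of_real t / x))) has_field_derivative exp (- (complex_of_real t / z)) * (of_real t / z^2)) (at z)"
    using z0 by (auto intro!: derivative_eq_intros simp: field_simps power2_eq_square)
  have q: "((\<lambda>x. (x / (x + 1))^2) has_field_derivative 2 * z / (z+1)^3) (at z)"
    apply (rule derivative_eq_intros refl)+
    using z0 z1 apply (simp_all)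
    apply (simp add: divide_simps power2_eq_square power3_eq_cube)
    done
  show ?thesis unfolding ft_eq
    apply (rule DERIV_mult[THEN DERIV_cong, OF q])
    using e apply simp
    using z0 z1 by (simp add: field_simps power2_eq_square power3_eq_cube)
qed

lemma ft_holo: "f_t t holomorphic_on rhp"
  using ft_has_deriv unfolding rhp_def
  by (metis (no_types, lifting) field_differentiable_def holomorphic_on_def mem_Collect_eq field_differentiable_at_within)

lemma deriv_bounds:
  fixes x y t :: real
  assumes x: "x > 0" and t: "t > 0"
  defines "z \<equiv> Complex x y"
  shows "norm (deriv (f_t t) z) \<le> 2/(1+x)^2 + t/(1+x)^2"
    and "norm (deriv (f_t t) z) \<le> 2/(1+x)^2 + 1/x"
proof -
  have Rez: "Re z = x" "Im z = y" by (simp_all add: z_def)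
  define r where "r = norm z"
  define q where "q = norm (z + 1)"
  define E where "E = exp (- (t * x / r^2))"
  have r2: "r^2 = x^2 + y^2" unfolding r_def z_def by (simp add: cmod_power2)
  have q2: "q^2 = (x+1)^2 + y^2" unfolding q_def z_def by (simp add: cmod_power2)
  have rpos: "r > 0" unfolding r_def z_def using x by (auto simp: complex_eq_iff)
  have qx: "1 + x \<le> q" using abs_Re_le_cmod[of "z+1"] Rez unfolding q_def by simp
  have qr: "r \<le> q"
  proof -
    have "r^2 \<le> q^2" using r2 q2 x by (simp add: power2_eq_square algebra_simps)
    then show ?thesis using power2_le_imp_le[of r q] unfolding q_def by simp
  qed
  have qpos: "q > 0" using qx x by simp
  have D: "deriv (f_t t) z = exp(- of_real t / z) * (2*z/(z+1)^3 + of_real t/(z+1)^2)"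
    using ft_has_deriv[of z t] x Rez by (auto intro: DERIV_imp_deriv)
  have ReE: "Re (- of_real t / z) = - (t * x / r^2)"
    using Rez unfolding r_def by (simp add: Re_divide cmod_power2)
  have nE: "norm (exp(- of_real t / z)) = E"
    unfolding E_def norm_exp_eq_Re ReE by simp
  have Epos: "E > 0" and E1: "E \<le> 1" unfolding E_def using t x rpos by auto
  have n1: "norm (2*z/(z+1)^3) = 2*r/q^3" unfolding r_def q_def by (simp add: norm_divide norm_power)
  have n2: "norm (of_real t/(z+1)^2) = t/q^2" unfolding q_def using t by (simp add: norm_divide norm_power)
  have main: "norm (deriv (f_t t) z) \<le> E * (2*r/q^3) + E * (t/q^2)"
  proof -
    have "norm (deriv (f_t t) z) = E * norm (2*z/(z+1)^3 + of_real t/(z+1)^2)"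
      unfolding D norm_mult nE ..
    also have "\<dots> \<le> E * (2*r/q^3 + t/q^2)"
      using norm_triangle_ineq[of "2*z/(z+1)^3" "of_real t/(z+1)^2"] n1 n2 Epos
      by (intro mult_left_mono) auto
    finally show ?thesis by (simp add: algebra_simps)
  qed
  have a1: "E * (2*r/q^3) \<le> 2/(1+x)^2"
  proof -
    have "E * (2*r/q^3) \<le> 2*r/q^3" using E1 Epos rpos qpos by (intro mult_left_le_one_le) auto
    also have "\<dots> \<le> 2/q^2" using qr qpos rpos by (simp add: divide_simps power3_eq_cube power2_eq_square)
    also have "\<dots> \<le> 2/(1+x)^2" using qx x by (intro divide_left_mono power_mono mult_pos_pos) auto
    finally show ?thesis .
  qed
  have a2: "E * (t/q^2) \<le> t/(1+x)^2"
  proof -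
    have "E * (t/q^2) \<le> t/q^2" using E1 Epos t qpos by (intro mult_left_le_one_le) auto
    also have "\<dots> \<le> t/(1+x)^2" using qx x t by (intro divide_left_mono power_mono mult_pos_pos) auto
    finally show ?thesis .
  qed
  have a3: "E * (t/q^2) \<le> 1/x"
  proof -
    have "E * (t/q^2) \<le> E * (t/r^2)" using Epos t qr rpos
      by (intro mult_left_mono divide_left_mono power_mono) auto
    also have "\<dots> = (exp (- s) * s) / x" if "s = t * x / r^2" for s
      using that x unfolding E_def by (simp add: field_simps)
    then have "E * (t/r^2) = (exp (- (t * x / r^2)) * (t * x / r^2)) / x" by blast
    also have "\<dots> \<le> 1 / x"
    proof -
      have gen: "exp (- s) * s \<le> 1" for s :: real
      proof -
        have "s \<le> exp s" using exp_ge_add_one_self[of s] by linarith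
        then have "s / exp s \<le> 1" by (simp add: pos_divide_le_eq)
        then show ?thesis by (simp add: exp_minus divide_inverse mult.commute)
      qed
      have "exp (- (t * x / r^2)) * (t * x / r^2) \<le> 1" by (rule gen)
      then show ?thesis using x by (intro divide_right_mono) auto
    qed
    finally show ?thesis .
  qed
  show "norm (deriv (f_t t) z) \<le> 2/(1+x)^2 + t/(1+x)^2" using main a1 a2 by linarith
  show "norm (deriv (f_t t) z) \<le> 2/(1+x)^2 + 1/x" using main a1 a3 by linarith
qed

lemma ft_norm_le1:
  assumes "Re z > 0" "t > 0"
  shows "norm (f_t t z) \<le> 1"
proof -
  have z0: "z \<noteq> 0" using assms by auto
  have le: "norm z \<le> norm (z + 1)"
  proof -
    have e1: "(norm z)^2 = Re z^2 + Im z^2" by (simp add: cmod_power2)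
    have e2: "(norm (z+1))^2 = (Re z + 1)^2 + Im z^2" by (simp add: cmod_power2)
    have "(norm z)^2 \<le> (norm (z+1))^2" unfolding e1 e2 using assms(1) by (simp add: power2_eq_square algebra_simps)
    then show ?thesis using power2_le_imp_le by simp
  qed
  have "norm (z / (z+1)) \<le> 1" using le by (simp add: norm_divide divide_le_eq_1)
  moreover have "norm (exp (- complex_of_real t / z)) \<le> 1"
    using assms by (simp add: norm_exp_eq_Re Re_divide divide_nonneg_pos)
  ultimately show ?thesis unfolding f_t_def norm_mult norm_power
    by (simp add: mult_le_one power_le_one)
qed

lemma pointwise:
  fixes x y t :: real
  assumes x: "x > 0" and t: "t > 0"
  shows "ennreal (norm (deriv (f_t t) (Complex x y))) \<le>
     ennreal (2/(1+x)^2) * indicator {0..} x + ennreal t * indicator {0..1/(1+t)} x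
     + ennreal (1/x) * indicator {1/(1+t)..1+t} x + ennreal (t/(1+x)^2) * indicator {1+t..} x"
proof -
  note B = deriv_bounds[OF x t, of y]
  have n1: "0 \<le> 2/(1+x)^2" "0 \<le> 1/x" "0 \<le> t/(1+x)^2" using x t by auto
  have tt: "t/(1+x)^2 \<le> t"
  proof -
    have "1 \<le> (1+x)^2" using x by (simp add: power2_eq_square) (smt (verit) mult_ge1_I)
    then show ?thesis using t by (simp add: divide_le_eq mult_le_cancel_left1)
  qed
  have real: "norm (deriv (f_t t) (Complex x y)) \<le>
     (2/(1+x)^2) * indicator {0..} x + t * indicator {0..1/(1+t)} x
     + (1/x) * indicator {1/(1+t)..1+t} x + (t/(1+x)^2) * indicator {1+t..} x"
  proof (cases "x \<le> 1/(1+t)")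
    case True
    then show ?thesis using B n1 tt x by (auto split: split_indicator)
  next
    case False
    then show ?thesis
    proof (cases "x \<le> 1+t")
      case True
      then show ?thesis using False B n1 tt x by (auto split: split_indicator)
    next
      case False2: False
      then show ?thesis using False B n1 tt x by (auto split: split_indicator)
    qed
  qed
  have "ennreal (norm (deriv (f_t t) (Complex x y))) \<le> ennreal ((2/(1+x)^2) * indicator {0..} x + t * indicator {0..1/(1+t)} x
     + (1/x) * indicator {1/(1+t)..1+t} x + (t/(1+x)^2) * indicator {1+t..} x)"
    using real by (rule ennreal_leI)
  also have "\<dots> = ennreal (2/(1+x)^2) * indicator {0..} x + ennreal t * indicator {0..1/(1+t)} x
     + ennreal (1/x) * indicator {1/(1+t)..1+t} x + ennreal (t/(1+x)^2) * indicator {1+t..} x"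
    using n1 t by (simp add: ennreal_plus split: split_indicator)
  finally show ?thesis .
qed

lemma int1: "(\<integral>\<^sup>+x. ennreal (2/(1+x)^2) * indicator {0..} x \<partial>lborel) = ennreal 2"
proof -
  have "(\<integral>\<^sup>+x. ennreal (2/(1+x)^2) * indicator {0..} x \<partial>lborel) = ennreal (0 - (-2/(1+0)))"
  proof (rule nn_integral_FTC_atLeast)
    show "(\<lambda>x::real. 2/(1+x)^2) \<in> borel_measurable borel" by measurable
    show "((\<lambda>x::real. -2/(1+x)) has_real_derivative 2/(1+x)^2) (at x)" if "0 \<le> x" for x
      using that by (auto intro!: derivative_eq_intros simp: power2_eq_square field_simps)
    show "0 \<le> 2/(1+x)^2" for x :: real by simp
    have "filterlim (\<lambda>x::real. 1 + x) at_infinity at_top"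
      by (intro filterlim_at_top_imp_at_infinity filterlim_tendsto_add_at_top[OF tendsto_const filterlim_ident])
    then show "((\<lambda>x::real. -2/(1+x)) \<longlongrightarrow> 0) at_top"
      by (intro tendsto_divide_0[OF tendsto_const])
  qed
  then show ?thesis by simp
qed

lemma int4:
  assumes "t > 0"
  shows "(\<integral>\<^sup>+x. ennreal (t/(1+x)^2) * indicator {1+t..} x \<partial>lborel) = ennreal (t/(2+t))"
proof -
  have "(\<integral>\<^sup>+x. ennreal (t/(1+x)^2) * indicator {1+t..} x \<partial>lborel) = ennreal (0 - (-t/(1+(1+t))))"
  proof (rule nn_integral_FTC_atLeast)
    show "(\<lambda>x::real. t/(1+x)^2) \<in> borel_measurable borel" by measurable
    show "((\<lambda>x::real. -t/(1+x)) has_real_derivative t/(1+x)^2) (at x)" if "1+t \<le> x" for x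
      using that assms by (auto intro!: derivative_eq_intros simp: power2_eq_square field_simps)
    show "0 \<le> t/(1+x)^2" for x :: real using assms by simp
    have "filterlim (\<lambda>x::real. 1 + x) at_infinity at_top"
      by (intro filterlim_at_top_imp_at_infinity filterlim_tendsto_add_at_top[OF tendsto_const filterlim_ident])
    then show "((\<lambda>x::real. -t/(1+x)) \<longlongrightarrow> 0) at_top"
      by (intro tendsto_divide_0[OF tendsto_const])
  qed
  then show ?thesis by (simp add: add.assoc)
qed

lemma int2:
  assumes "t > 0"
  shows "(\<integral>\<^sup>+x. ennreal t * indicator {0..1/(1+t)} x \<partial>lborel) = ennreal (t/(1+t))"
proof -
  have "(\<integral>\<^sup>+x. ennreal t * indicator {0..1/(1+t)} x \<partial>lborel) = ennreal (t * (1/(1+t)) - t * 0)"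
  proof (rule nn_integral_FTC_Icc)
    show "(\<lambda>x::real. t) \<in> borel_measurable borel" by measurable
    show "((\<lambda>x::real. t * x) has_real_derivative t) (at x)" for x
      by (auto intro!: derivative_eq_intros)
  qed (use assms in auto)
  then show ?thesis by simp
qed

lemma int3:
  assumes "t > 0"
  shows "(\<integral>\<^sup>+x. ennreal (1/x) * indicator {1/(1+t)..1+t} x \<partial>lborel) = ennreal (2 * ln (1+t))"
proof -
  have "(\<integral>\<^sup>+x. ennreal (1/x) * indicator {1/(1+t)..1+t} x \<partial>lborel) = ennreal (ln (1+t) - ln (1/(1+t)))"
  proof (rule nn_integral_FTC_Icc)
    show "(\<lambda>x::real. 1/x) \<in> borel_measurable borel" by measurable
    have xp: "0 < x" if "x \<in> {1/(1+t)..1+t}" for x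
    proof -
      have "0 < 1/(1+t)" using assms by simp
      then show ?thesis using that by (meson atLeastAtMost_iff less_le_trans)
    qed
    show "(ln has_real_derivative 1/x) (at x)" if "x \<in> {1/(1+t)..1+t}" for x
      using xp[OF that] by (auto intro!: derivative_eq_intros simp: field_simps)
    show "0 \<le> 1/x" if "x \<in> {1/(1+t)..1+t}" for x
      using xp[OF that] by auto
    show "1/(1+t) \<le> 1+t" using assms by (simp add: field_simps)
  qed
  then show ?thesis using assms by (simp add: ln_div)
qed

lemma deriv_part_bound:
  assumes t: "t > 0"
  shows "B_deriv_part (f_t t) \<le> ennreal (4 + 2 * ln (1+t))"
proof -
  let ?S = "\<lambda>x. (SUP y::real. ennreal (norm (deriv (f_t t) (Complex x y))))"
  let ?P1 = "\<lambda>x::real. ennreal (2/(1+x)^2) * indicator {0..} x"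
  let ?P2 = "\<lambda>x::real. ennreal t * indicator {0..1/(1+t)} x"
  let ?P3 = "\<lambda>x::real. ennreal (1/x) * indicator {1/(1+t)..1+t} x"
  let ?P4 = "\<lambda>x::real. ennreal (t/(1+x)^2) * indicator {1+t..} x"
  have "B_deriv_part (f_t t) = (\<integral>\<^sup>+x. ?S x * indicator {0<..} x \<partial>lborel)"
    unfolding B_deriv_part_def by (rule nn_integral_restrict_space) simp
  also have "\<dots> \<le> (\<integral>\<^sup>+x. ?P1 x + ?P2 x + ?P3 x + ?P4 x \<partial>lborel)"
  proof (rule nn_integral_mono)
    fix x :: real
    show "?S x * indicator {0<..} x \<le> ?P1 x + ?P2 x + ?P3 x + ?P4 x"
    proof (cases "x > 0")
      case True
      then have "?S x \<le> ?P1 x + ?P2 x + ?P3 x + ?P4 x"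
        using pointwise[OF True t] by (intro SUP_least) auto
      then show ?thesis using True by simp
    qed simp
  qed
  also have "\<dots> = (\<integral>\<^sup>+x. ?P1 x \<partial>lborel) + (\<integral>\<^sup>+x. ?P2 x \<partial>lborel)
      + (\<integral>\<^sup>+x. ?P3 x \<partial>lborel) + (\<integral>\<^sup>+x. ?P4 x \<partial>lborel)"
    by (simp add: nn_integral_add)
  also have "\<dots> = ennreal 2 + ennreal (t/(1+t)) + ennreal (2 * ln (1+t)) + ennreal (t/(2+t))"
    using int1 int2[OF t] int3[OF t] int4[OF t] by simp
  also have "\<dots> = ennreal (2 + t/(1+t) + 2 * ln (1+t) + t/(2+t))"
    using t by (simp add: ennreal_plus)
  also have "\<dots> \<le> ennreal (4 + 2 * ln (1+t))"
  proof (rule ennreal_leI)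
    have "t/(1+t) \<le> 1" "t/(2+t) \<le> 1" using t by (simp_all add: divide_le_eq)
    then show "2 + t/(1+t) + 2 * ln (1+t) + t/(2+t) \<le> 4 + 2 * ln (1+t)" by linarith
  qed
  finally show ?thesis .
qed

lemma sup_part_bound:
  assumes t: "t > 0"
  shows "B_sup_part (f_t t) \<le> 1"
  unfolding B_sup_part_def
  by (rule SUP_least) (use ft_norm_le1 t in \<open>auto simp: rhp_def\<close>)

theorem lemma3p5:
  shows "\<exists>C::real. \<forall>t::real. t > 0 \<longrightarrow>
           in_B (f_t t) \<and> B_norm (f_t t) \<le> ennreal (C * (1 + ln (1 + t)))"
proof (intro exI allI impI)
  fix t :: real
  assume t: "t > 0"
  have ln0: "0 \<le> ln (1+t)" using t by simp
  have "B_norm (f_t t) \<le> 1 + ennreal (4 + 2 * ln (1+t))"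
    unfolding B_norm_def using sup_part_bound[OF t] deriv_part_bound[OF t] by (rule add_mono)
  also have "\<dots> = ennreal (5 + 2 * ln (1+t))"
  proof -
    have "ennreal (1 + (4 + 2*ln(1+t))) = ennreal 1 + ennreal (4 + 2*ln(1+t))"
      by (rule ennreal_plus) (use ln0 in auto)
    then show ?thesis by simp
  qed
  also have "\<dots> \<le> ennreal (5 * (1 + ln (1 + t)))"
    using ln0 by (intro ennreal_leI) simp
  finally have le: "B_norm (f_t t) \<le> ennreal (5 * (1 + ln (1 + t)))" .
  moreover have "B_norm (f_t t) < \<infinity>" using le by (simp add: le_less_trans)
  ultimately show "in_B (f_t t) \<and> B_norm (f_t t) \<le> ennreal (5 * (1 + ln (1 + t)))"
    unfolding in_B_def using ft_holo by simp
qed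

end
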